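(* For each $\alpha\in[0,\infty)$, the function $d^{\alpha}_{\mathcal{N},\mathrm{GP}}$ is a pseudometric on the collection of all measure networks; that is, for all measure networks $X,Y,Z$: $d^{\alpha}_{\mathcal{N},\mathrm{GP}}(X,Y)\ge0$, $d^{\alpha}_{\mathcal{N},\mathrm{GP}}(X,X)=0$, $d^{\alpha}_{\mathcal{N},\mathrm{GP}}(X,Y)=d^{\alpha}_{\mathcal{N},\mathrm{GP}}(Y,X)$, and $d^{\alpha}_{\mathcal{N},\mathrm{GP}}(X,Z)\le d^{\alpha}_{\mathcal{N},\mathrm{GP}}(X,Y)+d^{\alpha}_{\mathcal{N},\mathrm{GP}}(Y,Z)$.
   Context: A measure network is a triple $(X,\omega_X,\mu_X)$ where $X$ is a Polish space, $\mu_X$ is a fully supported Borel probability measure on $X$, and $\omega_X:X\times X\to\mathbb{R}$ is a bounded Borel measurable function. $\mathscr{C}(\mu_X,\mu_Y)$ denotes the set of Borel probability measures on $X\times Y$ with marginals $\mu_X$ and $\mu_Y$. For $\alpha\in[0,\infty)$ the network Gromov–Prokhorov distance is $d^{\alpha}_{\mathcal{N},\mathrm{GP}}(X,Y):=\frac12\inf_{\mu\in\mathscr{C}(\mu_X,\mu_Y)}\inf\{\varepsilon>0:\ \mu\otimes\mu(\{(x,y,x',y')\in(X\times Y)^2: |\omega_X(x,x')-\omega_Y(y,y')|\ge\varepsilon\})\le\alpha\varepsilon\}.$ *)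

theory Defs
  imports "HOL-Probability.Probability"
begin

text \<open>A measure network (X, omega, mu): X is a Polish space (rendered as a type of
class polish_space), mu a fully supported Borel probability measure on X, and
omega a bounded Borel measurable function on X \<times> X.\<close>

definition measure_network :: "('a::polish_space \<Rightarrow> 'a \<Rightarrow> real) \<Rightarrow> 'a measure \<Rightarrow> bool" where
  "measure_network \<omega> \<mu> \<longleftrightarrow>
     sets \<mu> = sets borel \<and> prob_space \<mu> \<and>
     (\<forall>U. open U \<and> U \<noteq> {} \<longrightarrow> emeasure \<mu> U > 0) \<and>
     (\<lambda>(x, y). \<omega> x y) \<in> borel_measurable borel \<and>
     (\<exists>C. \<forall>x y. \<bar>\<omega> x y\<bar> \<le> C)"

definition couplings :: "'a::polish_space measure \<Rightarrow> 'b::polish_space measure \<Rightarrow> ('a \<times> 'b) measure set" where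
  "couplings \<mu>X \<mu>Y = {\<mu>. sets \<mu> = sets borel \<and> prob_space \<mu> \<and>
       distr \<mu> borel fst = \<mu>X \<and> distr \<mu> borel snd = \<mu>Y}"

definition dNGP :: "real \<Rightarrow> ('a::polish_space \<Rightarrow> 'a \<Rightarrow> real) \<Rightarrow> 'a measure
                   \<Rightarrow> ('b::polish_space \<Rightarrow> 'b \<Rightarrow> real) \<Rightarrow> 'b measure \<Rightarrow> real" where
  "dNGP \<alpha> \<omega>X \<mu>X \<omega>Y \<mu>Y = (1/2) *
     (INF \<mu>\<in>couplings \<mu>X \<mu>Y.
        Inf {\<epsilon>::real. \<epsilon> > 0 \<and>
          measure (\<mu> \<Otimes>\<^sub>M \<mu>)
            {((x, y), (x', y')). \<epsilon> \<le> \<bar>\<omega>X x x' - \<omega>Y y y'\<bar>} \<le> \<alpha> * \<epsilon>})"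

end

theory Submission
  imports Defs
begin
lemma geom_sum_bound: "(\<Sum>i\<le>n. (1::real) / 2^(i+2)) \<le> 1/2"
proof -
  have "(\<Sum>i\<le>n. (1::real) / 2^(i+2)) = 1/2 - 1/2^(n+2)"
    by (induction n) (auto simp: field_simps)
  then show ?thesis by simp
qed

lemma compact_content_cont:
  fixes A :: "'a::t2_space set set" and m :: "'a set \<Rightarrow> ennreal" and K :: "'a set \<Rightarrow> nat \<Rightarrow> 'a set"
  assumes alg: "algebra UNIV A" and pos: "positive A m" and add: "additive A m"
   and fin: "\<And>X. X\<in>A \<Longrightarrow> m X \<noteq> \<infinity>"
   and KA: "\<And>X k. X\<in>A \<Longrightarrow> K X k \<in> A" and Kc: "\<And>X k. X\<in>A \<Longrightarrow> compact (K X k)"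
   and Ksub: "\<And>X k. X\<in>A \<Longrightarrow> K X k \<subseteq> X"
   and Kapp: "\<And>X e. X\<in>A \<Longrightarrow> e>0 \<Longrightarrow> \<exists>k. m X \<le> m (K X k) + ennreal e"
   and X: "range X \<subseteq> A" "decseq X" "(\<Inter>i. X i) = {}"
  shows "(\<lambda>i. m (X i)) \<longlonglongrightarrow> 0"
proof -
  interpret algebra UNIV A by fact
  have XA: "X i \<in> A" for i using X(1) by auto
  have mono: "m S \<le> m T" if "S \<in> A" "T \<in> A" "S \<subseteq> T" for S T
    using additive_increasing[OF pos add] that unfolding increasing_def by blast
  have anti: "antimono (\<lambda>i. m (X i))"
    using X(2) by (intro antimonoI mono XA) (auto simp: decseq_def)
  have lim: "(\<lambda>i. m (X i)) \<longlonglongrightarrow> (INF i. m (X i))"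
    by (rule LIMSEQ_INF[OF anti])
  have "(INF i. m (X i)) = 0"
  proof (rule ccontr)
    assume nz: "(INF i. m (X i)) \<noteq> 0"
    have "(INF i. m (X i)) \<le> m (X 0)" by (rule INF_lower) simp
    then have "(INF i. m (X i)) \<noteq> \<infinity>" using fin[OF XA[of 0]] by (auto simp: top_unique)
    then obtain d where d: "(INF i. m (X i)) = ennreal d" "d \<ge> 0" by (cases "INF i. m (X i)") auto
    with nz have dpos: "d > 0" by auto
    define e where "e i = d / 2^(i+2)" for i :: nat
    have epos: "e i > 0" for i using dpos by (simp add: e_def)
    have "\<forall>i. \<exists>k. m (X i) \<le> m (K (X i) k) + ennreal (e i)" using Kapp[OF XA epos] by blast
    then obtain k where k: "\<And>i. m (X i) \<le> m (K (X i) (k i)) + ennreal (e i)" by metis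
    define KK where "KK i = K (X i) (k i)" for i
    have KKA: "KK i \<in> A" for i by (simp add: KK_def KA XA)
    have KKsub: "KK i \<subseteq> X i" for i by (simp add: KK_def Ksub XA)
    have KKc: "compact (KK i)" for i by (simp add: KK_def Kc XA)
    have diff: "m (X i - KK i) \<le> ennreal (e i)" for i
    proof -
      have "m (X i) = m (KK i \<union> (X i - KK i))" using KKsub[of i] by (simp add: Un_absorb1)
      also have "\<dots> = m (KK i) + m (X i - KK i)"
        by (rule additiveD[OF add]) (auto simp: KKA XA)
      finally have "m (KK i) + m (X i - KK i) \<le> m (KK i) + ennreal (e i)"
        using k[of i] by (simp add: KK_def)
      then show ?thesis using fin[OF KKA[of i]] by (simp add: ennreal_add_left_cancel_le)
    qed
    define C where "C n = (\<Inter>i\<le>n. KK i)" for n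
    have CA: "C n \<in> A" for n
      unfolding C_def by (induction n) (auto simp: atMost_Suc KKA)
    have Cne: "C n \<noteq> {}" for n
    proof
      assume C0: "C n = {}"
      have sub: "X n \<subseteq> C n \<union> (\<Union>i\<le>n. X i - KK i)"
        using X(2) by (auto simp: C_def decseq_def)
      have UA: "(\<Union>i\<le>n. X i - KK i) \<in> A"
        by (induction n) (auto simp: atMost_Suc XA KKA intro!: Un Diff)
      have "m (X n) \<le> m (C n \<union> (\<Union>i\<le>n. X i - KK i))"
        by (rule mono) (use sub UA CA XA in auto)
      also have "\<dots> = m (\<Union>i\<le>n. X i - KK i)" using C0 by simp
      also have "\<dots> \<le> (\<Sum>i\<le>n. m (X i - KK i))"
        by (rule subadditive[OF pos add]) (auto simp: XA KKA)
      also have "\<dots> \<le> (\<Sum>i\<le>n. ennreal (e i))" by (intro sum_mono diff)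
      also have "\<dots> = ennreal (\<Sum>i\<le>n. e i)" using epos by (simp add: less_imp_le sum_ennreal)
      also have "(\<Sum>i\<le>n. e i) = d * (\<Sum>i\<le>n. (1::real) / 2^(i+2))"
        by (simp add: e_def sum_distrib_left)
      also have "\<dots> \<le> d * (1/2)" using geom_sum_bound dpos by (intro mult_left_mono) auto
      finally have "m (X n) \<le> ennreal (d/2)" by (simp add: ennreal_leI)
      moreover have "ennreal d \<le> m (X n)" using d(1) by (metis INF_lower UNIV_I)
      ultimately have "ennreal d \<le> ennreal (d/2)" by order
      then show False using dpos by (simp add: ennreal_le_iff)
    qed
    have "KK 0 \<inter> \<Inter>(range C) \<noteq> {}"
    proof (rule compact_imp_fip[OF KKc[of 0]])
      fix T assume "T \<in> range C"
      then obtain n where "T = C n" by auto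
      then show "closed T" unfolding C_def using KKc compact_imp_closed by (auto intro!: closed_INT)
    next
      fix F' assume F': "finite F'" "F' \<subseteq> range C"
      then obtain I where I: "finite I" "F' = C ` I" by (meson finite_subset_image)
      define n where "n = Max (insert 0 I)"
      have "C n \<subseteq> KK 0 \<inter> \<Inter>F'"
      proof -
        have "i \<le> n" if "i \<in> I" for i using I(1) that by (simp add: n_def)
        moreover have "C n \<subseteq> C i" if "i \<le> n" for i using that by (auto simp: C_def)
        moreover have "C n \<subseteq> KK 0" by (auto simp: C_def)
        ultimately have "C n \<subseteq> (\<Inter>i\<in>I. C i)" "C n \<subseteq> KK 0" by (auto intro!: INF_greatest)
        then show ?thesis using I(2) by simp
      qed
      then show "KK 0 \<inter> \<Inter>F' \<noteq> {}" using Cne[of n] by blast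
    qed
    moreover have "\<Inter>(range C) \<subseteq> (\<Inter>i. X i)"
    proof (rule subsetI)
      fix x assume x: "x \<in> \<Inter>(range C)"
      have "x \<in> X i" for i
      proof -
        have "x \<in> C i" using x by blast
        then have "x \<in> KK i" by (simp add: C_def)
        then show ?thesis using KKsub[of i] by blast
      qed
      then show "x \<in> (\<Inter>i. X i)" by blast
    qed
    ultimately have "KK 0 \<inter> (\<Inter>i. X i) \<noteq> {}" by blast
    then show False using X(3) by simp
  qed
  with lim show ?thesis by simp
qed

datatype trm = TB nat | TC trm | TU trm trm | TK trm nat

instance trm :: countable by countable_datatype

lemma sets_borel_prod[measurable_cong]:
  "sets (borel :: ('a::second_countable_topology \<times> 'b::second_countable_topology) measure) = sets (borel \<Otimes>\<^sub>M borel)"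
  by (metis borel_prod)

lemma rect_borel[measurable]:
  "A \<in> sets borel \<Longrightarrow> B \<in> sets borel \<Longrightarrow> A \<times> B \<in> sets (borel::('a::second_countable_topology \<times> 'b::second_countable_topology) measure)"
  using pair_measureI[of A borel B borel] borel_prod by metis

lemma borel_fst[measurable]: "fst \<in> (borel::('a::second_countable_topology \<times> 'b::second_countable_topology) measure) \<rightarrow>\<^sub>M borel"
  using measurable_fst[of "borel::'a measure" "borel::'b measure"] borel_prod by metis

lemma borel_snd[measurable]: "snd \<in> (borel::('a::second_countable_topology \<times> 'b::second_countable_topology) measure) \<rightarrow>\<^sub>M borel"
  using measurable_snd[of "borel::'a measure" "borel::'b measure"] borel_prod by metis

lemma borel_Pair[measurable]:
  assumes "f \<in> M \<rightarrow>\<^sub>M (borel::'a::second_countable_topology measure)" "g \<in> M \<rightarrow>\<^sub>M (borel::'b::second_countable_topology measure)"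
  shows "(\<lambda>x. (f x, g x)) \<in> M \<rightarrow>\<^sub>M (borel::('a \<times> 'b) measure)"
  using measurable_Pair[OF assms] borel_prod by metis

locale disint =
  fixes P :: "('a::polish_space \<times> 'b::polish_space) measure"
  assumes sP: "sets P = sets borel" and pP: "prob_space P"
begin

definition "nu = distr P borel fst"
definition "mu = distr P borel snd"
definition "nuA A = distr (density P (indicator (A \<times> UNIV))) borel snd"
definition "f A = RN_deriv mu (nuA A)"

lemma spaceP[simp]: "space P = UNIV"
  using sets_eq_imp_space_eq[OF sP] by simp

lemma meas_P_iff[measurable_cong]: "S \<in> sets P \<longleftrightarrow> S \<in> sets borel"
  using sP by simp

lemma sets_mu[simp, measurable_cong]: "sets mu = sets borel" by (simp add: mu_def)
lemma space_mu[simp]: "space mu = UNIV" by (simp add: mu_def)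
lemma sets_nu[simp, measurable_cong]: "sets nu = sets borel" by (simp add: nu_def)
lemma space_nu[simp]: "space nu = UNIV" by (simp add: nu_def)

lemma prob_mu: "prob_space mu"
  unfolding mu_def by (rule prob_space.prob_space_distr[OF pP]) (simp add: measurable_cong_sets[OF sP refl])

lemma prob_nu: "prob_space nu"
  unfolding nu_def by (rule prob_space.prob_space_distr[OF pP]) (simp add: measurable_cong_sets[OF sP refl])

lemma emeasure_nu: "A \<in> sets borel \<Longrightarrow> emeasure nu A = emeasure P (A \<times> UNIV)"
  unfolding nu_def
  by (subst emeasure_distr) (auto simp: measurable_cong_sets[OF sP refl] vimage_fst)

lemma emeasure_mu: "B \<in> sets borel \<Longrightarrow> emeasure mu B = emeasure P (UNIV \<times> B)"
  unfolding mu_def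
  by (subst emeasure_distr) (auto simp: measurable_cong_sets[OF sP refl] vimage_snd)

lemma emeasure_nuA:
  assumes A: "A \<in> sets borel" and B: "B \<in> sets borel"
  shows "emeasure (nuA A) B = emeasure P (A \<times> B)"
proof -
  have AU: "A \<times> UNIV \<in> sets P" using A by (simp add: sP)
  have "emeasure (nuA A) B = emeasure (density P (indicator (A \<times> UNIV))) (snd -` B)"
    unfolding nuA_def using B
    by (subst emeasure_distr) (auto simp: measurable_cong_sets[OF sP refl])
  also have "\<dots> = (\<integral>\<^sup>+ x. indicator (A \<times> UNIV) x * indicator (snd -` B) x \<partial>P)"
    using AU B by (subst emeasure_density) (auto simp: sP measurable_cong_sets[OF sP refl] vimage_snd)
  also have "\<dots> = (\<integral>\<^sup>+ x. indicator (A \<times> B) x \<partial>P)"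
    by (intro nn_integral_cong) (auto split: split_indicator)
  also have "\<dots> = emeasure P (A \<times> B)"
    using A B by (intro nn_integral_indicator) (simp add: sP)
  finally show ?thesis .
qed

lemma sets_nuA[simp]: "sets (nuA A) = sets borel" by (simp add: nuA_def)

lemma f_measurable[measurable]: "f A \<in> borel_measurable borel"
proof -
  have "RN_deriv mu (nuA A) \<in> borel_measurable mu" by (rule borel_measurable_RN_deriv)
  moreover have "borel_measurable mu = borel_measurable borel"
    by (rule measurable_cong_sets) simp_all
  ultimately show ?thesis unfolding f_def by simp
qed

lemma f_meas_mu[measurable]: "f A \<in> borel_measurable mu"
  unfolding f_def by (rule borel_measurable_RN_deriv)

lemma density_f:
  assumes A: "A \<in> sets borel"
  shows "density mu (f A) = nuA A"
proof -
  interpret mu: prob_space mu by (rule prob_mu)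
  have ac: "absolutely_continuous mu (nuA A)"
    unfolding absolutely_continuous_def
  proof
    fix B assume "B \<in> null_sets mu"
    then have B: "B \<in> sets borel" "emeasure mu B = 0" by (auto simp: null_sets_def)
    then have B: "B \<in> sets borel" "emeasure P (UNIV \<times> B) = 0" by (auto simp: emeasure_mu)
    have "emeasure P (A \<times> B) \<le> emeasure P (UNIV \<times> B)"
      using A B by (intro emeasure_mono) (auto simp: sP)
    then show "B \<in> null_sets (nuA A)" using B A by (simp add: emeasure_nuA null_sets_def)
  qed
  show ?thesis unfolding f_def by (rule mu.density_RN_deriv[OF ac]) simp
qed

lemma f_int:
  assumes A: "A \<in> sets borel" and B: "B \<in> sets borel"
  shows "(\<integral>\<^sup>+ y \<in> B. f A y \<partial>mu) = emeasure P (A \<times> B)"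
proof -
  have "(\<integral>\<^sup>+ y \<in> B. f A y \<partial>mu) = emeasure (density mu (f A)) B"
    using B by (subst emeasure_density) (auto simp: mult.commute)
  also have "\<dots> = emeasure P (A \<times> B)" using A B by (simp add: density_f emeasure_nuA)
  finally show ?thesis .
qed

lemma f_AE_eq:
  assumes g: "g \<in> borel_measurable borel" and A: "A \<in> sets borel"
  assumes eq: "\<And>B. B \<in> sets borel \<Longrightarrow> (\<integral>\<^sup>+ y \<in> B. g y \<partial>mu) = emeasure P (A \<times> B)"
  shows "AE y in mu. f A y = g y"
proof -
  interpret mu: prob_space mu by (rule prob_mu)
  show ?thesis
  proof (rule mu.density_unique2)
    show "g \<in> borel_measurable mu" using g measurable_cong_sets[of mu borel borel borel] by simp
  qed (auto simp: f_int A eq)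
qed

end

context disint begin

lemma inner_approx:
  assumes A: "A \<in> sets borel" and e: "e > 0"
  shows "\<exists>K. compact K \<and> K \<subseteq> A \<and> emeasure nu A \<le> emeasure nu K + ennreal e"
proof -
  interpret nu: prob_space nu by (rule prob_nu)
  have eq: "emeasure nu A = (SUP K \<in> {K. K \<subseteq> A \<and> compact K}. emeasure nu K)"
    by (rule inner_regular) (auto simp: A)
  have "\<exists>K \<in> {K. K \<subseteq> A \<and> compact K}. emeasure nu A < emeasure nu K + ennreal e"
    by (rule SUP_approx_ennreal[OF e _ eq]) auto
  then show ?thesis by (auto intro: less_imp_le)
qed

definition "Kraw A j = (SOME K. compact K \<and> K \<subseteq> A \<and> emeasure nu A \<le> emeasure nu K + ennreal (1 / Suc j))"
definition "Kc A m = (\<Union>j\<le>m. Kraw A j)"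

lemma Kraw:
  assumes "A \<in> sets borel"
  shows "compact (Kraw A j) \<and> Kraw A j \<subseteq> A \<and> emeasure nu A \<le> emeasure nu (Kraw A j) + ennreal (1 / Suc j)"
  unfolding Kraw_def by (rule someI_ex) (rule inner_approx[OF assms], simp)

lemma Kc_compact: "A \<in> sets borel \<Longrightarrow> compact (Kc A m)"
  unfolding Kc_def using Kraw by (intro compact_UN) auto

lemma Kc_sub: "A \<in> sets borel \<Longrightarrow> Kc A m \<subseteq> A"
  unfolding Kc_def using Kraw by blast

lemma Kc_mono: "Kc A m \<subseteq> Kc A (Suc m)"
  unfolding Kc_def by (auto simp: atMost_Suc)

lemma Kc_approx:
  assumes A: "A \<in> sets borel"
  shows "emeasure nu A \<le> emeasure nu (Kc A m) + ennreal (1 / Suc m)"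
proof -
  have "emeasure nu (Kraw A m) \<le> emeasure nu (Kc A m)"
    using Kc_compact[OF A] by (intro emeasure_mono) (auto simp: Kc_def compact_imp_closed intro: borel_closed)
  then have "emeasure nu (Kraw A m) + ennreal (1 / Suc m) \<le> emeasure nu (Kc A m) + ennreal (1 / Suc m)"
    by (rule add_right_mono)
  moreover have "emeasure nu A \<le> emeasure nu (Kraw A m) + ennreal (1 / Suc m)"
    using Kraw[OF A, of m] by blast
  ultimately show ?thesis by (rule order_trans[rotated])
qed

definition "BB = (SOME B::'a set set. countable B \<and> topological_basis B)"

lemma BB: "countable BB" "topological_basis BB"
  using someI_ex[OF ex_countable_basis] unfolding BB_def by auto

definition "bas n = from_nat_into (insert {} BB) n"

lemma bas_open: "open (bas n)"
proof -
  have "bas n \<in> insert {} BB" unfolding bas_def by (rule from_nat_into) simp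
  then show ?thesis using BB topological_basis_open by auto
qed

primrec ev :: "trm \<Rightarrow> 'a set" where
  "ev (TB n) = bas n"
| "ev (TC t) = - ev t"
| "ev (TU s t) = ev s \<union> ev t"
| "ev (TK t m) = Kc (ev t) m"

definition "AA = range ev"

lemma ev_borel: "ev t \<in> sets borel"
  by (induction t) (auto simp: bas_open Kc_compact compact_imp_closed intro: borel_closed)

lemma AA_borel: "S \<in> AA \<Longrightarrow> S \<in> sets borel"
  unfolding AA_def using ev_borel by auto

lemma countable_AA: "countable AA"
  unfolding AA_def by simp

lemma Kc_AA: "S \<in> AA \<Longrightarrow> Kc S m \<in> AA"
proof -
  assume "S \<in> AA" then obtain t where "S = ev t" by (auto simp: AA_def)
  then have "Kc S m = ev (TK t m)" by simp
  then show ?thesis unfolding AA_def by (metis rangeI)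
qed

lemma compl_AA: "S \<in> AA \<Longrightarrow> - S \<in> AA"
proof -
  assume "S \<in> AA" then obtain t where "S = ev t" by (auto simp: AA_def)
  then have "- S = ev (TC t)" by simp
  then show ?thesis unfolding AA_def by (metis rangeI)
qed

lemma Un_AA: "S \<in> AA \<Longrightarrow> T \<in> AA \<Longrightarrow> S \<union> T \<in> AA"
proof -
  assume "S \<in> AA" "T \<in> AA" then obtain s t where "S = ev s" "T = ev t" by (auto simp: AA_def)
  then have "S \<union> T = ev (TU s t)" by simp
  then show ?thesis unfolding AA_def by (metis rangeI)
qed

lemma UNIV_AA: "UNIV \<in> AA"
proof -
  have "ev (TU (TB 0) (TC (TB 0))) = UNIV" by auto
  then show ?thesis unfolding AA_def by (metis rangeI)
qed

lemma empty_AA: "{} \<in> AA"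
  using compl_AA[OF UNIV_AA] by simp

lemma Int_AA: "S \<in> AA \<Longrightarrow> T \<in> AA \<Longrightarrow> S \<inter> T \<in> AA"
proof -
  assume a: "S \<in> AA" "T \<in> AA"
  have "S \<inter> T = - (- S \<union> - T)" by simp
  then show ?thesis using compl_AA[OF Un_AA[OF compl_AA[OF a(1)] compl_AA[OF a(2)]]] by simp
qed

lemma Diff_AA: "S \<in> AA \<Longrightarrow> T \<in> AA \<Longrightarrow> S - T \<in> AA"
  using compl_AA Int_AA by (simp add: Diff_eq)

lemma algebra_AA: "algebra UNIV AA"
proof -
  have "\<forall>a\<in>AA. UNIV - a \<in> AA" using compl_AA by (simp add: Compl_eq_Diff_UNIV[symmetric])
  then show ?thesis unfolding algebra_iff_Un using empty_AA Un_AA by blast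
qed

lemma sigma_AA: "sigma_sets UNIV AA = sets borel"
proof
  show "sigma_sets UNIV AA \<subseteq> sets borel"
    using sets.sigma_sets_subset[of AA borel] AA_borel by auto
next
  have "sets borel = sets (sigma UNIV BB)"
    using borel_eq_countable_basis[OF BB] by simp
  also have "\<dots> = sigma_sets UNIV BB" by (rule sets_measure_of) simp
  also have "BB \<subseteq> AA"
  proof -
    have "BB \<subseteq> range bas" unfolding bas_def using subset_range_from_nat_into[of "insert {} BB"] BB(1) by auto
    also have "range bas \<subseteq> AA" unfolding AA_def by (metis ev.simps(1) image_subsetI rangeI)
    finally show ?thesis .
  qed
  then have "sigma_sets UNIV BB \<subseteq> sigma_sets UNIV AA" by (rule sigma_sets_subseteq)
  finally show "sets borel \<subseteq> sigma_sets UNIV AA" .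
qed

end

context disint begin

lemma f_add_AE:
  assumes A: "A \<in> sets borel" and B: "B \<in> sets borel" and disj: "A \<inter> B = {}"
  shows "AE y in mu. f (A \<union> B) y = f A y + f B y"
proof (rule f_AE_eq)
  show "(\<lambda>y. f A y + f B y) \<in> borel_measurable borel" by measurable
  show "A \<union> B \<in> sets borel" using A B by auto
  fix C :: "'b set" assume C: "C \<in> sets borel"
  have "(\<integral>\<^sup>+ y \<in> C. f A y + f B y \<partial>mu) = (\<integral>\<^sup>+ y. f A y * indicator C y + f B y * indicator C y \<partial>mu)"
    by (intro nn_integral_cong) (simp add: distrib_right)
  also have "\<dots> = (\<integral>\<^sup>+ y \<in> C. f A y \<partial>mu) + (\<integral>\<^sup>+ y \<in> C. f B y \<partial>mu)"
    using C by (intro nn_integral_add) auto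
  also have "\<dots> = emeasure P (A \<times> C) + emeasure P (B \<times> C)"
    using A B C by (simp add: f_int)
  also have "\<dots> = emeasure P (A \<times> C \<union> B \<times> C)"
    using A B C disj by (intro plus_emeasure) (auto simp: sP)
  also have "A \<times> C \<union> B \<times> C = (A \<union> B) \<times> C" by auto
  finally show "(\<integral>\<^sup>+ y \<in> C. f A y + f B y \<partial>mu) = emeasure P ((A \<union> B) \<times> C)" .
qed

lemma f_UNIV_AE: "AE y in mu. f UNIV y = 1"
proof (rule f_AE_eq)
  fix C :: "'b set" assume C: "C \<in> sets borel"
  show "(\<integral>\<^sup>+ y \<in> C. 1 \<partial>mu) = emeasure P (UNIV \<times> C)"
    using C by (simp add: emeasure_mu)
qed auto

lemma f_mono_AE:
  assumes A: "A \<in> sets borel" and B: "B \<in> sets borel" and sub: "A \<subseteq> B"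
  shows "AE y in mu. f A y \<le> f B y"
proof -
  have "AE y in mu. f (A \<union> (B - A)) y = f A y + f (B - A) y"
    using A B by (intro f_add_AE) auto
  moreover have "A \<union> (B - A) = B" using sub by auto
  ultimately show ?thesis by (auto elim!: AE_mp)
qed

lemma f_int_UNIV:
  assumes A: "A \<in> sets borel"
  shows "(\<integral>\<^sup>+ y. f A y \<partial>mu) = emeasure nu A"
  using f_int[OF A, of UNIV] A by (simp add: emeasure_nu)

lemma SUP_nu_Kc:
  assumes A: "A \<in> sets borel"
  shows "(SUP m. emeasure nu (Kc A m)) = emeasure nu A"
proof (rule antisym)
  show "(SUP m. emeasure nu (Kc A m)) \<le> emeasure nu A"
    using A Kc_sub Kc_compact by (intro SUP_least emeasure_mono) (auto intro: borel_closed compact_imp_closed)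
next
  show "emeasure nu A \<le> (SUP m. emeasure nu (Kc A m))"
  proof (rule ennreal_le_epsilon)
    fix e :: real assume e: "0 < e"
    obtain m :: nat where m: "1 / Suc m < e"
      using e by (metis nat_approx_posE)
    have "emeasure nu A \<le> emeasure nu (Kc A m) + ennreal (1 / Suc m)" by (rule Kc_approx[OF A])
    also have "\<dots> \<le> (SUP m. emeasure nu (Kc A m)) + ennreal e"
      using m by (intro add_mono SUP_upper ennreal_leI) auto
    finally show "emeasure nu A \<le> (SUP m. emeasure nu (Kc A m)) + ennreal e" .
  qed
qed

lemma f_Kc_AE:
  assumes A: "A \<in> AA"
  shows "AE y in mu. (SUP m. f (Kc A m) y) = f A y"
proof -
  have Ab: "A \<in> sets borel" by (rule AA_borel[OF A])
  have Kb: "Kc A m \<in> sets borel" for m using Kc_AA[OF A] AA_borel by blast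
  define g where "g y = (SUP m. f (Kc A m) y)" for y
  have gm: "g \<in> borel_measurable mu" unfolding g_def by measurable
  have inc: "AE y in mu. f (Kc A m) y \<le> f (Kc A (Suc m)) y" for m
    using Kb by (intro f_mono_AE Kc_mono)
  have le: "AE y in mu. \<forall>m. f (Kc A m) y \<le> f A y"
    unfolding AE_all_countable using Kb Ab Kc_sub[OF Ab] by (auto intro!: f_mono_AE)
  then have gle: "AE y in mu. g y \<le> f A y"
    by eventually_elim (auto simp: g_def intro: SUP_least)
  have "(\<integral>\<^sup>+ y. g y \<partial>mu) = (SUP m. \<integral>\<^sup>+ y. f (Kc A m) y \<partial>mu)"
    unfolding g_def using inc by (intro nn_integral_monotone_convergence_SUP_AE[of "\<lambda>m y. f (Kc A m) y"]) auto
  also have "\<dots> = (SUP m. emeasure nu (Kc A m))" using Kb by (simp add: f_int_UNIV)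
  also have "\<dots> = emeasure nu A" by (rule SUP_nu_Kc[OF Ab])
  finally have intg: "(\<integral>\<^sup>+ y. g y \<partial>mu) = emeasure nu A" .
  have intf: "(\<integral>\<^sup>+ y. f A y \<partial>mu) = emeasure nu A" by (rule f_int_UNIV[OF Ab])
  have fin: "emeasure nu A \<noteq> \<infinity>"
    using prob_space.emeasure_le_1[OF prob_nu, of A] by (auto simp: top_unique)
  have "(\<integral>\<^sup>+ y. f A y \<partial>mu) = (\<integral>\<^sup>+ y. (f A y - g y) + g y \<partial>mu)"
    using gle by (intro nn_integral_cong_AE) (auto elim!: AE_mp simp: diff_add_cancel_ennreal)
  also have "\<dots> = (\<integral>\<^sup>+ y. (f A y - g y) \<partial>mu) + (\<integral>\<^sup>+ y. g y \<partial>mu)"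
    using gm by (intro nn_integral_add) auto
  finally have "emeasure nu A + (\<integral>\<^sup>+ y. (f A y - g y) \<partial>mu) = emeasure nu A + 0"
    using intg intf by (simp add: add.commute)
  then have "(\<integral>\<^sup>+ y. (f A y - g y) \<partial>mu) = 0"
    using fin by (simp only: ennreal_add_left_cancel) auto
  then have "AE y in mu. f A y - g y = 0"
    using gm by (subst (asm) nn_integral_0_iff_AE) auto
  with gle show ?thesis
  proof (eventually_elim)
    case (elim y)
    have "f A y = (f A y - g y) + g y" using elim(1) by (rule diff_add_cancel_ennreal[symmetric])
    also have "\<dots> = g y" using elim by simp
    finally show ?case by (simp add: g_def)
  qed
qed

definition "Good y \<longleftrightarrow> f UNIV y = 1 \<and>
   (\<forall>A\<in>AA. \<forall>B\<in>AA. A \<inter> B = {} \<longrightarrow> f (A \<union> B) y = f A y + f B y) \<and>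
   (\<forall>A\<in>AA. (SUP m. f (Kc A m) y) = f A y)"

lemma AE_Good: "AE y in mu. Good y"
proof -
  have 1: "AE y in mu. \<forall>A\<in>AA. \<forall>B\<in>AA. A \<inter> B = {} \<longrightarrow> f (A \<union> B) y = f A y + f B y"
    using countable_AA AA_borel
    by (auto simp: AE_ball_countable intro!: f_add_AE)
  have 2: "AE y in mu. \<forall>A\<in>AA. (SUP m. f (Kc A m) y) = f A y"
    using countable_AA by (auto simp: AE_ball_countable intro!: f_Kc_AE)
  show ?thesis using 1 2 f_UNIV_AE unfolding Good_def by eventually_elim auto
qed

end

context disint begin

lemma Good_content:
  assumes G: "Good y"
  shows "\<exists>\<mu>'. (\<forall>s\<in>AA. \<mu>' s = f s y) \<and> measure_space UNIV (sigma_sets UNIV AA) \<mu>'"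
proof -
  interpret algebra UNIV AA by (rule algebra_AA)
  from G have g1: "f UNIV y = 1"
    and g2: "\<And>A B. A\<in>AA \<Longrightarrow> B\<in>AA \<Longrightarrow> A\<inter>B={} \<Longrightarrow> f (A\<union>B) y = f A y + f B y"
    and g3: "\<And>A. A\<in>AA \<Longrightarrow> (SUP m. f (Kc A m) y) = f A y"
    unfolding Good_def by auto
  have le1: "f A y \<le> 1" if A: "A \<in> AA" for A
  proof -
    have "f A y \<le> f A y + f (-A) y" by simp
    also have "\<dots> = f (A \<union> -A) y" using A compl_AA by (intro g2[symmetric]) auto
    also have "\<dots> = 1" using g1 by simp
    finally show ?thesis .
  qed
  have fin: "f A y \<noteq> \<infinity>" if "A \<in> AA" for A
    using le1[OF that] by (auto simp: top_unique)
  have f0: "f {} y = 0"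
  proof -
    have "f {} y + f {} y = f {} y + 0" using g2[OF empty_AA empty_AA] by simp
    then show ?thesis using fin[OF empty_AA] by (simp only: ennreal_add_left_cancel) auto
  qed
  have pos: "positive AA (\<lambda>A. f A y)" unfolding positive_def using f0 by simp
  have add: "additive AA (\<lambda>A. f A y)" unfolding additive_def using g2 by blast
  have Kapp: "\<exists>k. f X y \<le> f (Kc X k) y + ennreal e" if X: "X \<in> AA" and e: "e > 0" for X e
  proof -
    have "\<exists>i\<in>UNIV. f X y < f (Kc X i) y + ennreal e"
      by (rule SUP_approx_ennreal[OF e _ g3[OF X, symmetric] fin[OF X]]) simp
    then show ?thesis by (auto intro: less_imp_le)
  qed
  have cont: "(\<lambda>i. f (X i) y) \<longlonglongrightarrow> 0" if "range X \<subseteq> AA" "decseq X" "(\<Inter>i. X i) = {}" for X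
    by (rule compact_content_cont[OF algebra_AA pos add fin Kc_AA Kc_compact[OF AA_borel] Kc_sub[OF AA_borel] Kapp that])
  show ?thesis by (rule caratheodory_empty_continuous[OF pos add fin cont])
qed

definition "NN = (SOME N. {y. \<not> Good y} \<subseteq> N \<and> N \<in> null_sets mu)"

lemma NN: "{y. \<not> Good y} \<subseteq> NN" "NN \<in> null_sets mu"
proof -
  from AE_Good obtain N where "{x \<in> space mu. \<not> Good x} \<subseteq> N" "emeasure mu N = 0" "N \<in> sets mu"
    by (rule AE_E)
  then have "{y. \<not> Good y} \<subseteq> N" "N \<in> null_sets mu" by (auto simp: null_sets_def)
  then have "\<exists>N. {y. \<not> Good y} \<subseteq> N \<and> N \<in> null_sets mu" by blast
  then have "{y. \<not> Good y} \<subseteq> NN \<and> NN \<in> null_sets mu"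
    unfolding NN_def by (rule someI_ex)
  then show "{y. \<not> Good y} \<subseteq> NN" "NN \<in> null_sets mu" by auto
qed

lemma NN_sets: "NN \<in> sets mu" using NN(2) by auto

lemma NN_borel: "NN \<in> sets borel" using NN_sets by simp

lemma notNN_Good: "y \<notin> NN \<Longrightarrow> Good y" using NN(1) by auto

definition "kmu y = (SOME \<mu>'. (\<forall>s\<in>AA. \<mu>' s = f s y) \<and> measure_space UNIV (sigma_sets UNIV AA) \<mu>')"
definition "kern y = (if y \<in> NN then nu else measure_of UNIV (sigma_sets UNIV AA) (kmu y))"

lemma kmu: "y \<notin> NN \<Longrightarrow> (\<forall>s\<in>AA. kmu y s = f s y) \<and> measure_space UNIV (sigma_sets UNIV AA) (kmu y)"
proof -
  assume y: "y \<notin> NN"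
  have "\<exists>\<mu>'. (\<forall>s\<in>AA. \<mu>' s = f s y) \<and> measure_space UNIV (sigma_sets UNIV AA) \<mu>'"
    by (rule Good_content[OF notNN_Good[OF y]])
  then show ?thesis unfolding kmu_def by (rule someI_ex)
qed

lemma AA_Pow: "AA \<subseteq> Pow UNIV" by simp

lemma sets_kern[simp]: "sets (kern y) = sets borel"
proof -
  have "sets (measure_of UNIV (sigma_sets UNIV AA) (kmu y)) = sigma_sets UNIV (sigma_sets UNIV AA)"
    by (rule sets_measure_of) simp
  also have "\<dots> = sigma_sets UNIV AA" by (rule sigma_sets_sigma_sets_eq) simp
  also have "\<dots> = sets borel" by (rule sigma_AA)
  finally show ?thesis by (simp add: kern_def)
qed

lemma space_kern[simp]: "space (kern y) = UNIV"
  using sets_eq_imp_space_eq[OF sets_kern[of y]] by simp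

lemma kern_AA:
  assumes y: "y \<notin> NN" and A: "A \<in> AA"
  shows "emeasure (kern y) A = f A y"
proof -
  have ms: "measure_space UNIV (sigma_sets UNIV AA) (kmu y)" using kmu[OF y] by blast
  have "emeasure (kern y) A = kmu y A"
    unfolding kern_def using y ms A
    by (simp add: measure_space_def emeasure_measure_of_sigma sigma_sets.Basic)
  also have "\<dots> = f A y" using kmu[OF y] A by blast
  finally show ?thesis .
qed

lemma prob_kern: "prob_space (kern y)"
proof (cases "y \<in> NN")
  case True then show ?thesis using prob_nu by (simp add: kern_def)
next
  case False
  show ?thesis
  proof
    have "emeasure (kern y) (space (kern y)) = f UNIV y"
      using kern_AA[OF False UNIV_AA] by simp
    also have "\<dots> = 1" using notNN_Good[OF False] by (simp add: Good_def)
    finally show "emeasure (kern y) (space (kern y)) = 1" .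
  qed
qed

lemma Int_stable_AA: "Int_stable AA"
  unfolding Int_stable_def using Int_AA by blast

lemma kern_meas: "kern \<in> mu \<rightarrow>\<^sub>M prob_algebra borel"
proof (rule measurable_prob_algebra_generated[where \<Omega>=UNIV and G=AA])
  show "sets borel = sigma_sets UNIV AA" using sigma_AA by simp
  show "Int_stable AA" by (rule Int_stable_AA)
  show "AA \<subseteq> Pow UNIV" by simp
  show "prob_space (kern a)" for a by (rule prob_kern)
  show "sets (kern a) = sets borel" for a by simp
  fix A assume A: "A \<in> AA"
  have "(\<lambda>a. emeasure (kern a) A) = (\<lambda>a. if a \<in> NN then emeasure nu A else f A a)"
    using kern_AA[OF _ A] by (auto simp: kern_def)
  also have "\<dots> \<in> borel_measurable mu"
    by (rule measurable_If_set) (auto simp: NN_borel)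
  finally show "(\<lambda>a. emeasure (kern a) A) \<in> borel_measurable mu" .
qed

lemma kern_disint:
  assumes A: "A \<in> sets borel" and B: "B \<in> sets borel"
  shows "emeasure P (A \<times> B) = (\<integral>\<^sup>+ y \<in> B. emeasure (kern y) A \<partial>mu)"
proof -
  define M1 where "M1 = distr (density P (indicator (UNIV \<times> B))) borel fst"
  define D where "D = density mu (indicator B)"
  define M2 where "M2 = D \<bind> kern"
  have kmu': "kern \<in> mu \<rightarrow>\<^sub>M subprob_algebra borel" by (rule measurable_prob_algebraD[OF kern_meas])
  have eqm: "measurable D (subprob_algebra borel) = measurable mu (subprob_algebra borel)"
    by (rule measurable_cong_sets) (simp_all add: D_def)
  have kD: "kern \<in> D \<rightarrow>\<^sub>M subprob_algebra borel" using kmu' eqm by blast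
  have spD: "space D \<noteq> {}" by (simp add: D_def)
  have UB: "UNIV \<times> B \<in> sets P" using B by (simp add: sP)
  have e1: "emeasure M1 S = emeasure P (S \<times> B)" if S: "S \<in> sets borel" for S
  proof -
    have "emeasure M1 S = emeasure (density P (indicator (UNIV \<times> B))) (fst -` S)"
      unfolding M1_def using S
      by (subst emeasure_distr) (auto simp: measurable_cong_sets[OF sP refl])
    also have "\<dots> = (\<integral>\<^sup>+ x. indicator (UNIV \<times> B) x * indicator (fst -` S) x \<partial>P)"
      using UB S by (subst emeasure_density) (auto simp: sP measurable_cong_sets[OF sP refl] vimage_fst)
    also have "\<dots> = (\<integral>\<^sup>+ x. indicator (S \<times> B) x \<partial>P)"
      by (intro nn_integral_cong) (auto split: split_indicator)
    also have "\<dots> = emeasure P (S \<times> B)"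
      using S B by (intro nn_integral_indicator) (simp add: sP)
    finally show ?thesis .
  qed
  have e2: "emeasure M2 S = (\<integral>\<^sup>+ y \<in> B. emeasure (kern y) S \<partial>mu)" if S: "S \<in> sets borel" for S
  proof -
    have "emeasure M2 S = (\<integral>\<^sup>+ y. emeasure (kern y) S \<partial>D)"
      unfolding M2_def using S by (rule emeasure_bind[OF spD kD])
    also have "\<dots> = (\<integral>\<^sup>+ y. indicator B y * emeasure (kern y) S \<partial>mu)"
      unfolding D_def using B S kmu'
      by (subst nn_integral_density) (auto intro: measurable_emeasure_subprob_algebra)
    also have "\<dots> = (\<integral>\<^sup>+ y \<in> B. emeasure (kern y) S \<partial>mu)"
      by (simp add: mult.commute)
    finally show ?thesis .
  qed
  have AEN: "AE y in mu. y \<notin> NN" using NN(2) by (rule AE_not_in)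
  have "M1 = M2"
  proof (rule measure_eqI_generator_eq[where E=AA and \<Omega>=UNIV and A="\<lambda>_. UNIV"])
    show "Int_stable AA" by (rule Int_stable_AA)
    show "AA \<subseteq> Pow UNIV" by simp
    fix X assume X: "X \<in> AA"
    have "emeasure M2 X = (\<integral>\<^sup>+ y \<in> B. emeasure (kern y) X \<partial>mu)" using e2 AA_borel[OF X] by simp
    also have "\<dots> = (\<integral>\<^sup>+ y \<in> B. f X y \<partial>mu)"
      using AEN by (intro nn_integral_cong_AE) (auto elim!: AE_mp simp: kern_AA[OF _ X])
    also have "\<dots> = emeasure P (X \<times> B)" using f_int[OF AA_borel[OF X] B] .
    also have "\<dots> = emeasure M1 X" using e1 AA_borel[OF X] by simp
    finally show "emeasure M1 X = emeasure M2 X" by simp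
  next
    show "sets M1 = sigma_sets UNIV AA" by (simp add: M1_def sigma_AA)
    show "sets M2 = sigma_sets UNIV AA" unfolding M2_def
      by (subst sets_bind[where N=borel]) (simp_all add: spD sigma_AA)
    show "range (\<lambda>_. UNIV) \<subseteq> AA" using UNIV_AA by auto
    show "(\<Union>i::nat. UNIV) = UNIV" by simp
    have "emeasure P (UNIV \<times> B) \<noteq> \<infinity>"
      using prob_space.emeasure_le_1[OF pP, of "UNIV \<times> B"] by (auto simp: top_unique)
    then show "emeasure M1 UNIV \<noteq> \<infinity>" for i :: nat using e1[of UNIV] by simp
  qed
  then show ?thesis using e1[OF A] e2[OF A] by simp
qed

lemma disintegration:
  "\<exists>\<kappa>. \<kappa> \<in> mu \<rightarrow>\<^sub>M prob_algebra borel \<and>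
     (\<forall>A\<in>sets borel. \<forall>B\<in>sets borel. emeasure P (A \<times> B) = (\<integral>\<^sup>+ y \<in> B. emeasure (\<kappa> y) A \<partial>mu))"
  using kern_meas kern_disint by blast

end

lemma gluing:
  fixes P1 :: "('a::polish_space \<times> 'b::polish_space) measure" and P2 :: "('b \<times> 'c::polish_space) measure"
  assumes s1: "sets P1 = sets borel" and p1: "prob_space P1"
    and s2: "sets P2 = sets borel" and p2: "prob_space P2"
    and marg: "distr P1 borel snd = distr P2 borel fst"
  shows "\<exists>G :: ('a \<times> ('b \<times> 'c)) measure. sets G = sets borel \<and> prob_space G \<and>
           distr G borel (\<lambda>(x, p). (x, fst p)) = P1 \<and> distr G borel snd = P2"
proof -
  interpret disint P1 by (rule disint.intro[OF s1 p1])
  obtain \<kappa> where k: "\<kappa> \<in> mu \<rightarrow>\<^sub>M prob_algebra borel"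
    and dis: "\<And>A B. A\<in>sets borel \<Longrightarrow> B\<in>sets borel \<Longrightarrow> emeasure P1 (A \<times> B) = (\<integral>\<^sup>+ y \<in> B. emeasure (\<kappa> y) A \<partial>mu)"
    using disintegration by blast
  have kprob: "prob_space (\<kappa> y)" and ksets: "sets (\<kappa> y) = sets borel" for y
    using measurable_space[OF k, of y] by (auto simp: space_prob_algebra)
  have k': "\<kappa> \<in> mu \<rightarrow>\<^sub>M subprob_algebra borel" by (rule measurable_prob_algebraD[OF k])
  have sp2[simp]: "space P2 = UNIV" using sets_eq_imp_space_eq[OF s2] by simp
  have fstm: "fst \<in> P2 \<rightarrow>\<^sub>M mu"
    using borel_fst measurable_cong_sets[OF s2 sets_mu] by blast
  have kf: "(\<lambda>p. \<kappa> (fst p)) \<in> P2 \<rightarrow>\<^sub>M subprob_algebra borel"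
    using measurable_compose[OF fstm k'] by (simp add: comp_def)
  define K where "K p = distr (\<kappa> (fst p)) borel (\<lambda>x. (x, p))" for p :: "'b \<times> 'c"
  have Km: "K \<in> P2 \<rightarrow>\<^sub>M subprob_algebra borel"
    unfolding K_def
  proof (rule measurable_distr2[where f="\<lambda>p x. (x, p)"])
    have "(\<lambda>z. (snd z, fst z)) \<in> (P2 \<Otimes>\<^sub>M (borel::'a measure)) \<rightarrow>\<^sub>M (borel::('a \<times> ('b \<times> 'c)) measure)"
    proof -
      have "sets (P2 \<Otimes>\<^sub>M (borel::'a measure)) = sets (borel::(('b \<times> 'c) \<times> 'a) measure)"
        using s2 by (simp add: borel_prod[symmetric] cong: sets_pair_measure_cong)
      moreover have "(\<lambda>z. (snd z, fst z)) \<in> (borel::(('b \<times> 'c) \<times> 'a) measure) \<rightarrow>\<^sub>M (borel::('a \<times> ('b \<times> 'c)) measure)"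
        by measurable
      ultimately show ?thesis using measurable_cong_sets by blast
    qed
    moreover have "(\<lambda>(p::'b \<times> 'c, x::'a). (x, p)) = (\<lambda>z. (snd z, fst z))" by auto
    ultimately show "(\<lambda>(p::'b \<times> 'c, x::'a). (x, p)) \<in> (P2 \<Otimes>\<^sub>M (borel::'a measure)) \<rightarrow>\<^sub>M (borel::('a \<times> ('b \<times> 'c)) measure)" by simp
  qed (rule kf)
  have Ksets: "sets (K p) = sets borel" for p by (simp add: K_def)
  have Kprob: "prob_space (K p)" for p
    unfolding K_def by (rule prob_space.prob_space_distr[OF kprob]) (simp add: measurable_cong_sets[OF ksets refl])
  define G where "G = P2 \<bind> K"
  have sG: "sets G = sets borel" unfolding G_def by (subst sets_bind[where N=borel]) (simp_all add: Ksets)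
  have spG: "space G = UNIV" using sets_eq_imp_space_eq[OF sG] by simp
  have pG: "prob_space G"
  proof
    have "emeasure G (space G) = emeasure G UNIV" by (simp add: spG)
    also have "\<dots> = (\<integral>\<^sup>+ p. emeasure (K p) UNIV \<partial>P2)"
      unfolding G_def by (rule emeasure_bind[OF _ Km]) simp_all
    also have "\<dots> = (\<integral>\<^sup>+ p. 1 \<partial>P2)"
    proof (intro nn_integral_cong)
      fix p
      have "space (K p) = UNIV" using sets_eq_imp_space_eq[OF Ksets[of p]] by simp
      then show "emeasure (K p) UNIV = 1" using prob_space.emeasure_space_1[OF Kprob[of p]] by simp
    qed
    also have "\<dots> = 1" using prob_space.emeasure_space_1[OF p2] by simp
    finally show "emeasure G (space G) = 1" .
  qed
  have m2: "distr G borel snd = P2"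
  proof -
    have "distr G borel snd = P2 \<bind> (\<lambda>p. distr (K p) borel snd)"
      unfolding G_def by (rule distr_bind[OF Km]) simp_all
    also have "\<dots> = P2 \<bind> return borel"
    proof (rule bind_cong[OF refl])
      fix p assume "p \<in> space P2"
      have "distr (K p) borel snd = distr (\<kappa> (fst p)) borel (\<lambda>x. p)"
        unfolding K_def by (subst distr_distr) (auto simp: measurable_cong_sets[OF ksets refl] comp_def)
      also have "\<dots> = return borel p" by (rule prob_space.distr_const[OF kprob]) simp
      finally show "distr (K p) borel snd = return borel p" .
    qed
    also have "\<dots> = P2" by (rule bind_return''[OF s2])
    finally show ?thesis .
  qed
  define h where "h = (\<lambda>(x::'a, p::'b \<times> 'c). (x, fst p))"
  have hm: "h \<in> G \<rightarrow>\<^sub>M borel"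
  proof -
    have "h \<in> (borel::('a \<times> ('b \<times> 'c)) measure) \<rightarrow>\<^sub>M (borel::('a \<times> 'b) measure)"
      unfolding h_def case_prod_beta' by measurable
    then show ?thesis using measurable_cong_sets[OF sG refl] by blast
  qed
  have m1: "distr G borel h = P1"
  proof (rule measure_eqI_generator_eq[where E="{a \<times> b | a b. a \<in> sets borel \<and> b \<in> sets borel}" and \<Omega>=UNIV
        and A="\<lambda>_. UNIV"])
    show "Int_stable {a \<times> b | a b. a \<in> sets (borel::'a measure) \<and> b \<in> sets (borel::'b measure)}"
      using Int_stable_pair_measure_generator[of "borel::'a measure" "borel::'b measure"] by simp
    show "{a \<times> b | a b. a \<in> sets (borel::'a measure) \<and> b \<in> sets (borel::'b measure)} \<subseteq> Pow UNIV" by auto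
    have gen: "sets (borel::('a \<times> 'b) measure) = sigma_sets UNIV {a \<times> b | a b. a \<in> sets (borel::'a measure) \<and> b \<in> sets (borel::'b measure)}"
    proof -
      have "sets (borel::('a \<times> 'b) measure) = sets ((borel::'a measure) \<Otimes>\<^sub>M (borel::'b measure))"
        by (rule sets_borel_prod)
      also have "\<dots> = sigma_sets (space (borel::'a measure) \<times> space (borel::'b measure))
          {a \<times> b | a b. a \<in> sets (borel::'a measure) \<and> b \<in> sets (borel::'b measure)}"
        by (rule sets_pair_measure)
      finally show ?thesis by simp
    qed
    show "sets (distr G borel h) = sigma_sets UNIV {a \<times> b | a b. a \<in> sets (borel::'a measure) \<and> b \<in> sets (borel::'b measure)}"
      using gen by simp
    show "sets P1 = sigma_sets UNIV {a \<times> b | a b. a \<in> sets (borel::'a measure) \<and> b \<in> sets (borel::'b measure)}"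
      using gen s1 by simp
    have "(UNIV::('a \<times> 'b) set) = UNIV \<times> UNIV \<and> UNIV \<in> sets (borel::'a measure) \<and> UNIV \<in> sets (borel::'b measure)"
      by simp
    then show "range (\<lambda>_. UNIV) \<subseteq> {a \<times> b | a b. a \<in> sets (borel::'a measure) \<and> b \<in> sets (borel::'b measure)}"
      by blast
    show "(\<Union>i::nat. UNIV) = UNIV" by simp
    show "emeasure (distr G borel h) UNIV \<noteq> \<infinity>" for i :: nat
      using prob_space.emeasure_le_1[OF prob_space.prob_space_distr[OF pG hm], of UNIV]
      by (auto simp: top_unique)
    fix X assume "X \<in> {a \<times> b | a b. a \<in> sets (borel::'a measure) \<and> b \<in> sets (borel::'b measure)}"
    then obtain A B where X: "X = A \<times> B" and A: "A \<in> sets borel" and B: "B \<in> sets borel" by auto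
    have hX: "h -` X \<inter> space G \<in> sets borel"
      using measurable_sets[OF hm, of X] X A B sG by simp
    have "emeasure (distr G borel h) X = emeasure G (h -` X \<inter> space G)"
      using X A B by (intro emeasure_distr[OF hm]) simp
    also have "\<dots> = emeasure G (h -` X)" by (simp add: spG)
    also have "\<dots> = (\<integral>\<^sup>+ p. emeasure (K p) (h -` X) \<partial>P2)"
      unfolding G_def by (rule emeasure_bind[OF _ Km]) (use hX spG in simp_all)
    also have "\<dots> = (\<integral>\<^sup>+ p. emeasure (\<kappa> (fst p)) A * indicator B (fst p) \<partial>P2)"
    proof (intro nn_integral_cong)
      fix p :: "'b \<times> 'c"
      have "emeasure (K p) (h -` X) = emeasure (\<kappa> (fst p)) ((\<lambda>x. (x, p)) -` (h -` X))"
        unfolding K_def using hX spG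
        by (subst emeasure_distr) (auto simp: measurable_cong_sets[OF ksets refl] ksets sets_eq_imp_space_eq[OF ksets])
      also have "(\<lambda>x. (x, p)) -` (h -` X) = (if fst p \<in> B then A else {})"
        by (auto simp: X h_def)
      finally show "emeasure (K p) (h -` X) = emeasure (\<kappa> (fst p)) A * indicator B (fst p)"
        by (simp split: split_indicator)
    qed
    also have "\<dots> = (\<integral>\<^sup>+ y. emeasure (\<kappa> y) A * indicator B y \<partial>distr P2 borel fst)"
    proof -
      have fst2: "fst \<in> P2 \<rightarrow>\<^sub>M borel" using fstm measurable_cong_sets[OF refl sets_mu] by blast
      have "(\<lambda>y. emeasure (\<kappa> y) A) \<in> borel_measurable mu"
        using measurable_compose[OF k' measurable_emeasure_subprob_algebra[OF A]] by (simp add: comp_def)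
      then have "(\<lambda>y. emeasure (\<kappa> y) A) \<in> borel_measurable borel"
        using measurable_cong_sets[OF sets_mu refl] by blast
      then have fm: "(\<lambda>y. emeasure (\<kappa> y) A * indicator B y) \<in> borel_measurable borel"
        using B by measurable
      have fm': "(\<lambda>y. emeasure (\<kappa> y) A * indicator B y) \<in> borel_measurable (distr P2 borel fst)"
        using fm measurable_cong_sets[OF sets_distr[of P2 borel fst] refl] by blast
      show ?thesis using nn_integral_distr[OF fst2 fm'] by simp
    qed
    also have "\<dots> = (\<integral>\<^sup>+ y \<in> B. emeasure (\<kappa> y) A \<partial>mu)"
      using marg by (simp add: mu_def)
    also have "\<dots> = emeasure P1 X" using dis[OF A B] X by simp
    finally show "emeasure (distr G borel h) X = emeasure P1 X" .
  qed
  show ?thesis using sG pG m1 m2 unfolding h_def by blast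
qed

definition badset :: "('a \<Rightarrow> 'a \<Rightarrow> real) \<Rightarrow> ('b \<Rightarrow> 'b \<Rightarrow> real) \<Rightarrow> real \<Rightarrow> (('a \<times> 'b) \<times> ('a \<times> 'b)) set" where
  "badset \<omega>X \<omega>Y \<epsilon> = {((x, y), (x', y')). \<epsilon> \<le> \<bar>\<omega>X x x' - \<omega>Y y y'\<bar>}"

definition Sset :: "real \<Rightarrow> ('a \<Rightarrow> 'a \<Rightarrow> real) \<Rightarrow> ('b \<Rightarrow> 'b \<Rightarrow> real) \<Rightarrow> ('a \<times> 'b) measure \<Rightarrow> real set" where
  "Sset \<alpha> \<omega>X \<omega>Y \<mu> = {\<epsilon>::real. \<epsilon> > 0 \<and> measure (\<mu> \<Otimes>\<^sub>M \<mu>) (badset \<omega>X \<omega>Y \<epsilon>) \<le> \<alpha> * \<epsilon>}"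

definition Fv :: "real \<Rightarrow> ('a \<Rightarrow> 'a \<Rightarrow> real) \<Rightarrow> ('b \<Rightarrow> 'b \<Rightarrow> real) \<Rightarrow> ('a \<times> 'b) measure \<Rightarrow> real" where
  "Fv \<alpha> \<omega>X \<omega>Y \<mu> = Inf (Sset \<alpha> \<omega>X \<omega>Y \<mu>)"

lemma dNGP_alt: "dNGP \<alpha> \<omega>X \<mu>X \<omega>Y \<mu>Y = (1/2) * (INF \<mu>\<in>couplings \<mu>X \<mu>Y. Fv \<alpha> \<omega>X \<omega>Y \<mu>)"
  unfolding dNGP_def Fv_def Sset_def badset_def ..

lemma om_meas:
  assumes "(\<lambda>(x, y). \<omega> x y) \<in> borel_measurable (borel :: ('a::second_countable_topology \<times> 'a) measure)"
    and "f \<in> M \<rightarrow>\<^sub>M borel" "g \<in> M \<rightarrow>\<^sub>M borel"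
  shows "(\<lambda>z. \<omega> (f z) (g z)) \<in> borel_measurable M"
  using measurable_compose[OF borel_Pair[OF assms(2,3)] assms(1)] by simp

lemma sets_pair_borel:
  "sets M = sets (borel::'a::second_countable_topology measure) \<Longrightarrow> sets N = sets (borel::'b::second_countable_topology measure) \<Longrightarrow>
   sets (M \<Otimes>\<^sub>M N) = sets (borel :: ('a \<times> 'b) measure)"
  using sets_pair_measure_cong[of M borel N borel] sets_borel_prod by metis

lemma badset_meas:
  fixes \<omega>X :: "'a::polish_space \<Rightarrow> 'a \<Rightarrow> real" and \<omega>Y :: "'b::polish_space \<Rightarrow> 'b \<Rightarrow> real"
  assumes "measure_network \<omega>X \<mu>X" "measure_network \<omega>Y \<mu>Y"
  shows "badset \<omega>X \<omega>Y \<epsilon> \<in> sets (borel :: (('a \<times> 'b) \<times> ('a \<times> 'b)) measure)"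
proof -
  have mX: "(\<lambda>(x, y). \<omega>X x y) \<in> borel_measurable borel" and mY: "(\<lambda>(x, y). \<omega>Y x y) \<in> borel_measurable borel"
    using assms by (auto simp: measure_network_def)
  have [measurable]: "(\<lambda>z. \<omega>X (fst (fst z)) (fst (snd z))) \<in> borel_measurable (borel :: (('a \<times> 'b) \<times> ('a \<times> 'b)) measure)"
    by (rule om_meas[OF mX]) measurable
  have [measurable]: "(\<lambda>z. \<omega>Y (snd (fst z)) (snd (snd z))) \<in> borel_measurable (borel :: (('a \<times> 'b) \<times> ('a \<times> 'b)) measure)"
    by (rule om_meas[OF mY]) measurable
  have "badset \<omega>X \<omega>Y \<epsilon> = {z \<in> space borel. \<epsilon> \<le> \<bar>\<omega>X (fst (fst z)) (fst (snd z)) - \<omega>Y (snd (fst z)) (snd (snd z))\<bar>}"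
    by (auto simp: badset_def)
  also have "\<dots> \<in> sets borel" by measurable
  finally show ?thesis .
qed

lemma Sset_ne:
  assumes "measure_network \<omega>X \<mu>X" "measure_network \<omega>Y \<mu>Y" and "\<alpha> \<ge> 0"
  shows "\<exists>\<epsilon>. \<epsilon> \<in> Sset \<alpha> \<omega>X \<omega>Y \<mu>"
proof -
  obtain CX where CX: "\<And>x y. \<bar>\<omega>X x y\<bar> \<le> CX" using assms(1) by (auto simp: measure_network_def)
  obtain CY where CY: "\<And>x y. \<bar>\<omega>Y x y\<bar> \<le> CY" using assms(2) by (auto simp: measure_network_def)
  define e where "e = \<bar>CX\<bar> + \<bar>CY\<bar> + 1"
  have "badset \<omega>X \<omega>Y e = {}"
  proof -
    have "\<bar>\<omega>X x x' - \<omega>Y y y'\<bar> < e" for x x' y y'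
      using CX[of x x'] CY[of y y'] unfolding e_def by linarith
    then show ?thesis by (auto simp: badset_def not_le)
  qed
  moreover have "e > 0" by (simp add: e_def add_pos_nonneg)
  ultimately have "e \<in> Sset \<alpha> \<omega>X \<omega>Y \<mu>" using assms(3) by (simp add: Sset_def)
  then show ?thesis by blast
qed

lemma Sset_pos: "\<epsilon> \<in> Sset \<alpha> \<omega>X \<omega>Y \<mu> \<Longrightarrow> \<epsilon> > 0" by (simp add: Sset_def)

lemma Sset_bdd: "bdd_below (Sset \<alpha> \<omega>X \<omega>Y \<mu>)"
  by (rule bdd_belowI[of _ 0]) (simp add: Sset_def)

lemma Fv_nonneg:
  assumes "measure_network \<omega>X \<mu>X" "measure_network \<omega>Y \<mu>Y" and "\<alpha> \<ge> 0"
  shows "Fv \<alpha> \<omega>X \<omega>Y \<mu> \<ge> 0"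
  unfolding Fv_def using Sset_ne[OF assms, of \<mu>]
  by (intro cInf_greatest) (auto dest: Sset_pos intro: less_imp_le)

lemma Fv_le: "\<epsilon> \<in> Sset \<alpha> \<omega>X \<omega>Y \<mu> \<Longrightarrow> Fv \<alpha> \<omega>X \<omega>Y \<mu> \<le> \<epsilon>"
  unfolding Fv_def by (rule cInf_lower[OF _ Sset_bdd])

lemma prod_coupling:
  fixes \<mu>X :: "'a::polish_space measure" and \<mu>Y :: "'b::polish_space measure"
  assumes "measure_network \<omega>X \<mu>X" "measure_network \<omega>Y \<mu>Y"
  shows "\<mu>X \<Otimes>\<^sub>M \<mu>Y \<in> couplings \<mu>X \<mu>Y"
proof -
  have sX: "sets \<mu>X = sets borel" and pX: "prob_space \<mu>X" and sY: "sets \<mu>Y = sets borel" and pY: "prob_space \<mu>Y"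
    using assms by (auto simp: measure_network_def)
  have spX: "space \<mu>X = UNIV" using sets_eq_imp_space_eq[OF sX] by simp
  have spY: "space \<mu>Y = UNIV" using sets_eq_imp_space_eq[OF sY] by simp
  note EPT = sigma_finite_measure.emeasure_pair_measure_Times[OF prob_space_imp_sigma_finite[OF pY]]
  have sP: "sets (\<mu>X \<Otimes>\<^sub>M \<mu>Y) = sets borel" by (rule sets_pair_borel[OF sX sY])
  have fm: "fst \<in> (\<mu>X \<Otimes>\<^sub>M \<mu>Y) \<rightarrow>\<^sub>M (borel::'a measure)" using borel_fst measurable_cong_sets[OF sP refl] by blast
  have sm: "snd \<in> (\<mu>X \<Otimes>\<^sub>M \<mu>Y) \<rightarrow>\<^sub>M (borel::'b measure)" using borel_snd measurable_cong_sets[OF sP refl] by blast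
  have d1: "distr (\<mu>X \<Otimes>\<^sub>M \<mu>Y) borel fst = \<mu>X"
  proof (rule measure_eqI)
    show "sets (distr (\<mu>X \<Otimes>\<^sub>M \<mu>Y) borel fst) = sets \<mu>X" using sX by simp
    fix A assume "A \<in> sets (distr (\<mu>X \<Otimes>\<^sub>M \<mu>Y) borel fst)"
    then have A: "A \<in> sets \<mu>X" using sX by simp
    have "emeasure (distr (\<mu>X \<Otimes>\<^sub>M \<mu>Y) borel fst) A = emeasure (\<mu>X \<Otimes>\<^sub>M \<mu>Y) (A \<times> UNIV)"
      using A sX by (subst emeasure_distr[OF fm]) (auto simp: space_pair_measure spX spY intro!: arg_cong2[where f=emeasure])
    also have "\<dots> = emeasure \<mu>X A * emeasure \<mu>Y UNIV"
      using A by (intro EPT) (auto simp: sY)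
    also have "\<dots> = emeasure \<mu>X A" using prob_space.emeasure_space_1[OF pY] spY by simp
    finally show "emeasure (distr (\<mu>X \<Otimes>\<^sub>M \<mu>Y) borel fst) A = emeasure \<mu>X A" .
  qed
  have d2: "distr (\<mu>X \<Otimes>\<^sub>M \<mu>Y) borel snd = \<mu>Y"
  proof (rule measure_eqI)
    show "sets (distr (\<mu>X \<Otimes>\<^sub>M \<mu>Y) borel snd) = sets \<mu>Y" using sY by simp
    fix A assume "A \<in> sets (distr (\<mu>X \<Otimes>\<^sub>M \<mu>Y) borel snd)"
    then have A: "A \<in> sets \<mu>Y" using sY by simp
    have "emeasure (distr (\<mu>X \<Otimes>\<^sub>M \<mu>Y) borel snd) A = emeasure (\<mu>X \<Otimes>\<^sub>M \<mu>Y) (UNIV \<times> A)"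
      using A sY by (subst emeasure_distr[OF sm]) (auto simp: space_pair_measure spX spY intro!: arg_cong2[where f=emeasure])
    also have "\<dots> = emeasure \<mu>X UNIV * emeasure \<mu>Y A"
      using A by (intro EPT) (auto simp: sX)
    also have "\<dots> = emeasure \<mu>Y A" using prob_space.emeasure_space_1[OF pX] spX by simp
    finally show "emeasure (distr (\<mu>X \<Otimes>\<^sub>M \<mu>Y) borel snd) A = emeasure \<mu>Y A" .
  qed
  show ?thesis unfolding couplings_def using sP d1 d2 prob_space_pair[OF pX pY] by blast
qed

lemma measure_pair_distr:
  fixes M :: "'a measure" and f :: "'a \<Rightarrow> 'b::second_countable_topology"
  assumes f: "f \<in> M \<rightarrow>\<^sub>M borel" and p: "prob_space M"
    and B: "B \<in> sets (borel :: ('b \<times> 'b) measure)"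
  shows "measure (distr M borel f \<Otimes>\<^sub>M distr M borel f) B =
         measure (M \<Otimes>\<^sub>M M) ((\<lambda>z. (f (fst z), f (snd z))) -` B \<inter> space (M \<Otimes>\<^sub>M M))"
proof -
  have sf: "sigma_finite_measure (distr M borel f)"
    by (rule prob_space_imp_sigma_finite[OF prob_space.prob_space_distr[OF p f]])
  have eq: "distr M borel f \<Otimes>\<^sub>M distr M borel f = distr (M \<Otimes>\<^sub>M M) (borel \<Otimes>\<^sub>M borel) (\<lambda>(x, y). (f x, f y))"
    by (rule pair_measure_distr[OF f f sf])
  have T: "(\<lambda>z. (f (fst z), f (snd z))) \<in> (M \<Otimes>\<^sub>M M) \<rightarrow>\<^sub>M (borel \<Otimes>\<^sub>M borel)"
    by (intro measurable_Pair measurable_compose[OF measurable_fst f] measurable_compose[OF measurable_snd f])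
  have B': "B \<in> sets ((borel :: 'b measure) \<Otimes>\<^sub>M (borel :: 'b measure))" using B sets_borel_prod by metis
  have "(\<lambda>(x, y). (f x, f y)) = (\<lambda>z. (f (fst z), f (snd z)))" by auto
  then show ?thesis unfolding eq using measure_distr[OF T B'] by simp
qed

lemma distr_id_borel:
  assumes sM: "sets M = sets borel"
  shows "distr M borel (\<lambda>x. x) = M"
proof (rule measure_eqI)
  show "sets (distr M borel (\<lambda>x. x)) = sets M" using sM by simp
  fix A assume "A \<in> sets (distr M borel (\<lambda>x. x))"
  then have A: "A \<in> sets M" using sM by simp
  have idm: "(\<lambda>x. x) \<in> M \<rightarrow>\<^sub>M borel" using measurable_ident_sets[OF sM] by simp
  have "emeasure (distr M borel (\<lambda>x. x)) A = emeasure M ((\<lambda>x. x) -` A \<inter> space M)"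
    using A sM by (intro emeasure_distr[OF idm]) simp
  also have "(\<lambda>x. x) -` A \<inter> space M = A" using sets.sets_into_space[OF A] by auto
  finally show "emeasure (distr M borel (\<lambda>x. x)) A = emeasure M A" .
qed

lemma network_basic:
  assumes "measure_network \<omega> \<mu>"
  shows "sets \<mu> = sets borel" "prob_space \<mu>" "space \<mu> = UNIV"
  using assms sets_eq_imp_space_eq[of \<mu> borel] by (auto simp: measure_network_def)

lemma coupling_basic:
  assumes "\<pi> \<in> couplings \<mu>X \<mu>Y"
  shows "sets \<pi> = sets borel" "prob_space \<pi>" "space \<pi> = UNIV" "distr \<pi> borel fst = \<mu>X" "distr \<pi> borel snd = \<mu>Y"
  using assms sets_eq_imp_space_eq[of \<pi> borel] by (auto simp: couplings_def)

lemma swap_coupling: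
  fixes \<mu>X :: "'a::polish_space measure" and \<mu>Y :: "'b::polish_space measure"
  assumes nX: "measure_network \<omega>X \<mu>X" and nY: "measure_network \<omega>Y \<mu>Y"
    and c: "\<pi> \<in> couplings \<mu>X \<mu>Y"
  shows "distr \<pi> borel (\<lambda>z. (snd z, fst z)) \<in> couplings \<mu>Y \<mu>X \<and>
         Fv \<alpha> \<omega>Y \<omega>X (distr \<pi> borel (\<lambda>z. (snd z, fst z))) = Fv \<alpha> \<omega>X \<omega>Y \<pi>"
proof -
  note cb = coupling_basic[OF c]
  define sw :: "'a \<times> 'b \<Rightarrow> 'b \<times> 'a" where "sw = (\<lambda>z. (snd z, fst z))"
  have swb: "sw \<in> (borel::('a \<times> 'b) measure) \<rightarrow>\<^sub>M (borel::('b \<times> 'a) measure)" unfolding sw_def by measurable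
  have swm: "sw \<in> \<pi> \<rightarrow>\<^sub>M borel" using swb measurable_cong_sets[OF cb(1) refl] by blast
  have fm: "fst \<in> \<pi> \<rightarrow>\<^sub>M (borel::'a measure)" using borel_fst measurable_cong_sets[OF cb(1) refl] by blast
  have sm: "snd \<in> \<pi> \<rightarrow>\<^sub>M (borel::'b measure)" using borel_snd measurable_cong_sets[OF cb(1) refl] by blast
  have "distr (distr \<pi> borel sw) borel fst = distr \<pi> borel (fst \<circ> sw)"
    by (rule distr_distr) (simp_all add: swm)
  also have "fst \<circ> sw = snd" by (auto simp: sw_def)
  finally have d1: "distr (distr \<pi> borel sw) borel fst = \<mu>Y" using cb(5) by simp
  have "distr (distr \<pi> borel sw) borel snd = distr \<pi> borel (snd \<circ> sw)"
    by (rule distr_distr) (simp_all add: swm)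
  also have "snd \<circ> sw = fst" by (auto simp: sw_def)
  finally have d2: "distr (distr \<pi> borel sw) borel snd = \<mu>X" using cb(4) by simp
  have cpl: "distr \<pi> borel sw \<in> couplings \<mu>Y \<mu>X"
    unfolding couplings_def using d1 d2 prob_space.prob_space_distr[OF cb(2) swm] by simp
  have "Sset \<alpha> \<omega>Y \<omega>X (distr \<pi> borel sw) = Sset \<alpha> \<omega>X \<omega>Y \<pi>"
  proof -
    have "measure (distr \<pi> borel sw \<Otimes>\<^sub>M distr \<pi> borel sw) (badset \<omega>Y \<omega>X e) = measure (\<pi> \<Otimes>\<^sub>M \<pi>) (badset \<omega>X \<omega>Y e)" for e
    proof -
      have "measure (distr \<pi> borel sw \<Otimes>\<^sub>M distr \<pi> borel sw) (badset \<omega>Y \<omega>X e) =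
            measure (\<pi> \<Otimes>\<^sub>M \<pi>) ((\<lambda>z. (sw (fst z), sw (snd z))) -` badset \<omega>Y \<omega>X e \<inter> space (\<pi> \<Otimes>\<^sub>M \<pi>))"
        by (rule measure_pair_distr[OF swm cb(2) badset_meas[OF nY nX]])
      also have "(\<lambda>z. (sw (fst z), sw (snd z))) -` badset \<omega>Y \<omega>X e \<inter> space (\<pi> \<Otimes>\<^sub>M \<pi>) = badset \<omega>X \<omega>Y e"
        by (auto simp: badset_def sw_def space_pair_measure cb(3) abs_minus_commute)
      finally show ?thesis .
    qed
    then show ?thesis by (simp add: Sset_def)
  qed
  then show ?thesis using cpl by (simp add: Fv_def sw_def)
qed

lemma diag_coupling:
  fixes \<mu>X :: "'a::polish_space measure"
  assumes nX: "measure_network \<omega>X \<mu>X" and a: "\<alpha> \<ge> 0"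
  shows "\<exists>\<pi>\<in>couplings \<mu>X \<mu>X. Fv \<alpha> \<omega>X \<omega>X \<pi> = 0"
proof -
  note nb = network_basic[OF nX]
  define dg :: "'a \<Rightarrow> 'a \<times> 'a" where "dg = (\<lambda>x. (x, x))"
  have dgb: "dg \<in> (borel::'a measure) \<rightarrow>\<^sub>M (borel::('a \<times> 'a) measure)" unfolding dg_def by measurable
  have dgm: "dg \<in> \<mu>X \<rightarrow>\<^sub>M borel" using dgb measurable_cong_sets[OF nb(1) refl] by blast
  have "distr (distr \<mu>X borel dg) borel fst = distr \<mu>X borel (fst \<circ> dg)"
    by (rule distr_distr) (simp_all add: dgm)
  also have "\<dots> = distr \<mu>X borel (\<lambda>x. x)" by (simp add: dg_def comp_def)
  also have "\<dots> = \<mu>X"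
    by (rule distr_id_borel[OF nb(1)])
  finally have d1: "distr (distr \<mu>X borel dg) borel fst = \<mu>X" .
  have "distr (distr \<mu>X borel dg) borel snd = distr \<mu>X borel (snd \<circ> dg)"
    by (rule distr_distr) (simp_all add: dgm)
  also have "\<dots> = distr \<mu>X borel (\<lambda>x. x)" by (simp add: dg_def comp_def)
  also have "\<dots> = \<mu>X"
    by (rule distr_id_borel[OF nb(1)])
  finally have d2: "distr (distr \<mu>X borel dg) borel snd = \<mu>X" .
  have cpl: "distr \<mu>X borel dg \<in> couplings \<mu>X \<mu>X"
    unfolding couplings_def using d1 d2 prob_space.prob_space_distr[OF nb(2) dgm] by simp
  have "Sset \<alpha> \<omega>X \<omega>X (distr \<mu>X borel dg) = {0<..}"
  proof -
    have "measure (distr \<mu>X borel dg \<Otimes>\<^sub>M distr \<mu>X borel dg) (badset \<omega>X \<omega>X e) = 0" if "e > 0" for e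
    proof -
      have "measure (distr \<mu>X borel dg \<Otimes>\<^sub>M distr \<mu>X borel dg) (badset \<omega>X \<omega>X e) =
            measure (\<mu>X \<Otimes>\<^sub>M \<mu>X) ((\<lambda>z. (dg (fst z), dg (snd z))) -` badset \<omega>X \<omega>X e \<inter> space (\<mu>X \<Otimes>\<^sub>M \<mu>X))"
        by (rule measure_pair_distr[OF dgm nb(2) badset_meas[OF nX nX]])
      also have "(\<lambda>z. (dg (fst z), dg (snd z))) -` badset \<omega>X \<omega>X e \<inter> space (\<mu>X \<Otimes>\<^sub>M \<mu>X) = {}"
        using that by (auto simp: badset_def dg_def)
      finally show ?thesis by simp
    qed
    then show ?thesis using a by (auto simp: Sset_def)
  qed
  then have "Fv \<alpha> \<omega>X \<omega>X (distr \<mu>X borel dg) = 0" by (simp add: Fv_def)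
  then show ?thesis using cpl by blast
qed

lemma tri_abs: "(e1::real) + e2 \<le> \<bar>a - c\<bar> \<Longrightarrow> e1 \<le> \<bar>a - b\<bar> \<or> e2 \<le> \<bar>b - c\<bar>"
  by (cases "a \<le> b"; cases "b \<le> c"; cases "a \<le> c") (auto simp: abs_if split: if_splits)

lemma triangle_step:
  fixes \<mu>X :: "'a::polish_space measure" and \<mu>Y :: "'b::polish_space measure" and \<mu>Z :: "'c::polish_space measure"
  assumes nX: "measure_network \<omega>X \<mu>X" and nY: "measure_network \<omega>Y \<mu>Y" and nZ: "measure_network \<omega>Z \<mu>Z"
    and a: "\<alpha> \<ge> 0"
    and c1: "\<pi>1 \<in> couplings \<mu>X \<mu>Y" and c2: "\<pi>2 \<in> couplings \<mu>Y \<mu>Z"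
  shows "\<exists>\<rho>\<in>couplings \<mu>X \<mu>Z. Fv \<alpha> \<omega>X \<omega>Z \<rho> \<le> Fv \<alpha> \<omega>X \<omega>Y \<pi>1 + Fv \<alpha> \<omega>Y \<omega>Z \<pi>2"
proof -
  note cb1 = coupling_basic[OF c1] and cb2 = coupling_basic[OF c2]
  obtain G :: "('a \<times> ('b \<times> 'c)) measure" where sG: "sets G = sets borel" and pG: "prob_space G"
    and m1: "distr G borel (\<lambda>(x, p). (x, fst p)) = \<pi>1" and m2: "distr G borel snd = \<pi>2"
    using gluing[OF cb1(1) cb1(2) cb2(1) cb2(2)] cb1(5) cb2(4) by metis
  have spG: "space G = UNIV" using sets_eq_imp_space_eq[OF sG] by simp
  define h1 :: "'a \<times> ('b \<times> 'c) \<Rightarrow> 'a \<times> 'b" where "h1 = (\<lambda>u. (fst u, fst (snd u)))"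
  define h2 :: "'a \<times> ('b \<times> 'c) \<Rightarrow> 'b \<times> 'c" where "h2 = snd"
  define j :: "'a \<times> ('b \<times> 'c) \<Rightarrow> 'a \<times> 'c" where "j = (\<lambda>u. (fst u, snd (snd u)))"
  have "(\<lambda>(x, p). (x, fst p)) = h1" by (auto simp: h1_def)
  with m1 have m1': "distr G borel h1 = \<pi>1" by simp
  have m2': "distr G borel h2 = \<pi>2" using m2 by (simp add: h2_def)
  have h1m: "h1 \<in> G \<rightarrow>\<^sub>M borel"
  proof -
    have "h1 \<in> (borel::('a \<times> ('b \<times> 'c)) measure) \<rightarrow>\<^sub>M (borel::('a \<times> 'b) measure)" unfolding h1_def by measurable
    then show ?thesis using measurable_cong_sets[OF sG refl] by blast
  qed
  have h2m: "h2 \<in> G \<rightarrow>\<^sub>M borel"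
  proof -
    have "h2 \<in> (borel::('a \<times> ('b \<times> 'c)) measure) \<rightarrow>\<^sub>M (borel::('b \<times> 'c) measure)" unfolding h2_def by measurable
    then show ?thesis using measurable_cong_sets[OF sG refl] by blast
  qed
  have jm: "j \<in> G \<rightarrow>\<^sub>M borel"
  proof -
    have "j \<in> (borel::('a \<times> ('b \<times> 'c)) measure) \<rightarrow>\<^sub>M (borel::('a \<times> 'c) measure)" unfolding j_def by measurable
    then show ?thesis using measurable_cong_sets[OF sG refl] by blast
  qed
  define \<rho> where "\<rho> = distr G borel j"
  have "distr \<rho> borel fst = distr G borel (fst \<circ> j)"
    unfolding \<rho>_def by (rule distr_distr) (simp_all add: jm)
  also have "fst \<circ> j = fst \<circ> h1" by (auto simp: j_def h1_def)
  also have "distr G borel (fst \<circ> h1) = distr (distr G borel h1) borel fst"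
    by (rule distr_distr[symmetric]) (simp_all add: h1m)
  finally have d1: "distr \<rho> borel fst = \<mu>X" using m1' cb1(4) by simp
  have "distr \<rho> borel snd = distr G borel (snd \<circ> j)"
    unfolding \<rho>_def by (rule distr_distr) (simp_all add: jm)
  also have "snd \<circ> j = snd \<circ> h2" by (auto simp: j_def h2_def)
  also have "distr G borel (snd \<circ> h2) = distr (distr G borel h2) borel snd"
    by (rule distr_distr[symmetric]) (simp_all add: h2m)
  finally have d2: "distr \<rho> borel snd = \<mu>Z" using m2' cb2(5) by simp
  have cpl: "\<rho> \<in> couplings \<mu>X \<mu>Z"
    unfolding couplings_def using d1 d2 prob_space.prob_space_distr[OF pG jm] by (simp add: \<rho>_def)
  interpret GG: prob_space "G \<Otimes>\<^sub>M G" by (rule prob_space_pair[OF pG pG])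
  have key: "e1 + e2 \<in> Sset \<alpha> \<omega>X \<omega>Z \<rho>" if e1: "e1 \<in> Sset \<alpha> \<omega>X \<omega>Y \<pi>1" and e2: "e2 \<in> Sset \<alpha> \<omega>Y \<omega>Z \<pi>2" for e1 e2
  proof -
    define H1 where "H1 = (\<lambda>z. (h1 (fst z), h1 (snd z))) -` badset \<omega>X \<omega>Y e1 \<inter> space (G \<Otimes>\<^sub>M G)"
    define H2 where "H2 = (\<lambda>z. (h2 (fst z), h2 (snd z))) -` badset \<omega>Y \<omega>Z e2 \<inter> space (G \<Otimes>\<^sub>M G)"
    define J where "J = (\<lambda>z. (j (fst z), j (snd z))) -` badset \<omega>X \<omega>Z (e1 + e2) \<inter> space (G \<Otimes>\<^sub>M G)"
    have PH1: "(\<lambda>z. (h1 (fst z), h1 (snd z))) \<in> (G \<Otimes>\<^sub>M G) \<rightarrow>\<^sub>M (borel::(('a \<times> 'b) \<times> ('a \<times> 'b)) measure)"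
      by (intro borel_Pair measurable_compose[OF measurable_fst h1m] measurable_compose[OF measurable_snd h1m])
    have PH2: "(\<lambda>z. (h2 (fst z), h2 (snd z))) \<in> (G \<Otimes>\<^sub>M G) \<rightarrow>\<^sub>M (borel::(('b \<times> 'c) \<times> ('b \<times> 'c)) measure)"
      by (intro borel_Pair measurable_compose[OF measurable_fst h2m] measurable_compose[OF measurable_snd h2m])
    have H1s: "H1 \<in> sets (G \<Otimes>\<^sub>M G)" unfolding H1_def
      by (rule measurable_sets[OF PH1 badset_meas[OF nX nY]])
    have H2s: "H2 \<in> sets (G \<Otimes>\<^sub>M G)" unfolding H2_def
      by (rule measurable_sets[OF PH2 badset_meas[OF nY nZ]])
    have sub: "J \<subseteq> H1 \<union> H2"
    proof
      fix z assume "z \<in> J"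
      then obtain x y w x' y' w' where z: "z = ((x, (y, w)), (x', (y', w')))"
        and le: "e1 + e2 \<le> \<bar>\<omega>X x x' - \<omega>Z w w'\<bar>"
        by (cases z) (auto simp: J_def badset_def j_def)
      from tri_abs[OF le, of "\<omega>Y y y'"] show "z \<in> H1 \<union> H2"
        by (auto simp: z H1_def H2_def badset_def h1_def h2_def space_pair_measure spG)
    qed
    have "measure (\<rho> \<Otimes>\<^sub>M \<rho>) (badset \<omega>X \<omega>Z (e1 + e2)) = measure (G \<Otimes>\<^sub>M G) J"
      unfolding \<rho>_def J_def by (rule measure_pair_distr[OF jm pG badset_meas[OF nX nZ]])
    also have "\<dots> \<le> measure (G \<Otimes>\<^sub>M G) (H1 \<union> H2)"
      using sub H1s H2s by (intro GG.finite_measure_mono) auto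
    also have "\<dots> \<le> measure (G \<Otimes>\<^sub>M G) H1 + measure (G \<Otimes>\<^sub>M G) H2"
      by (rule measure_Un_le[OF H1s H2s])
    also have "measure (G \<Otimes>\<^sub>M G) H1 = measure (\<pi>1 \<Otimes>\<^sub>M \<pi>1) (badset \<omega>X \<omega>Y e1)"
      unfolding H1_def m1'[symmetric] by (rule measure_pair_distr[OF h1m pG badset_meas[OF nX nY], symmetric])
    also have "measure (G \<Otimes>\<^sub>M G) H2 = measure (\<pi>2 \<Otimes>\<^sub>M \<pi>2) (badset \<omega>Y \<omega>Z e2)"
      unfolding H2_def m2'[symmetric] by (rule measure_pair_distr[OF h2m pG badset_meas[OF nY nZ], symmetric])
    also have "measure (\<pi>1 \<Otimes>\<^sub>M \<pi>1) (badset \<omega>X \<omega>Y e1) + measure (\<pi>2 \<Otimes>\<^sub>M \<pi>2) (badset \<omega>Y \<omega>Z e2) \<le> \<alpha> * e1 + \<alpha> * e2"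
      using e1 e2 by (intro add_mono) (auto simp: Sset_def)
    finally have "measure (\<rho> \<Otimes>\<^sub>M \<rho>) (badset \<omega>X \<omega>Z (e1 + e2)) \<le> \<alpha> * (e1 + e2)"
      by (simp add: distrib_left)
    moreover have "e1 + e2 > 0" using e1 e2 by (auto simp: Sset_def)
    ultimately show ?thesis by (simp add: Sset_def)
  qed
  have "Fv \<alpha> \<omega>X \<omega>Z \<rho> \<le> Fv \<alpha> \<omega>X \<omega>Y \<pi>1 + Fv \<alpha> \<omega>Y \<omega>Z \<pi>2"
  proof -
    have "Fv \<alpha> \<omega>X \<omega>Z \<rho> - e2 \<le> Fv \<alpha> \<omega>X \<omega>Y \<pi>1" if e2: "e2 \<in> Sset \<alpha> \<omega>Y \<omega>Z \<pi>2" for e2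
    proof -
      have "Fv \<alpha> \<omega>X \<omega>Z \<rho> - e2 \<le> Inf (Sset \<alpha> \<omega>X \<omega>Y \<pi>1)"
      proof (rule cInf_greatest)
        show "Sset \<alpha> \<omega>X \<omega>Y \<pi>1 \<noteq> {}" using Sset_ne[OF nX nY a] by blast
        fix e1 assume "e1 \<in> Sset \<alpha> \<omega>X \<omega>Y \<pi>1"
        then have "Fv \<alpha> \<omega>X \<omega>Z \<rho> \<le> e1 + e2" using key e2 Fv_le by blast
        then show "Fv \<alpha> \<omega>X \<omega>Z \<rho> - e2 \<le> e1" by simp
      qed
      then show ?thesis by (simp add: Fv_def)
    qed
    then have "Fv \<alpha> \<omega>X \<omega>Z \<rho> - Fv \<alpha> \<omega>X \<omega>Y \<pi>1 \<le> Inf (Sset \<alpha> \<omega>Y \<omega>Z \<pi>2)"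
      using Sset_ne[OF nY nZ a] by (intro cInf_greatest) (auto simp: algebra_simps)
    then show ?thesis by (simp add: Fv_def)
  qed
  then show ?thesis using cpl by blast
qed

lemma INF_nonneg_Fv:
  assumes "measure_network \<omega>X \<mu>X" "measure_network \<omega>Y \<mu>Y" "\<alpha> \<ge> 0"
  shows "(INF \<pi>\<in>couplings \<mu>X \<mu>Y. Fv \<alpha> \<omega>X \<omega>Y \<pi>) \<ge> 0"
  using prod_coupling[OF assms(1,2)] Fv_nonneg[OF assms]
  by (intro cINF_greatest) auto

lemma bdd_Fv:
  assumes "measure_network \<omega>X \<mu>X" "measure_network \<omega>Y \<mu>Y" "\<alpha> \<ge> 0"
  shows "bdd_below ((\<lambda>\<pi>. Fv \<alpha> \<omega>X \<omega>Y \<pi>) ` couplings \<mu>X \<mu>Y)"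
  using Fv_nonneg[OF assms] by (intro bdd_belowI[of _ 0]) auto

theorem mainTheorem5:
  fixes \<alpha> :: real
    and \<omega>X :: "'a::polish_space \<Rightarrow> 'a \<Rightarrow> real" and \<mu>X :: "'a measure"
    and \<omega>Y :: "'b::polish_space \<Rightarrow> 'b \<Rightarrow> real" and \<mu>Y :: "'b measure"
    and \<omega>Z :: "'c::polish_space \<Rightarrow> 'c \<Rightarrow> real" and \<mu>Z :: "'c measure"
  assumes "\<alpha> \<ge> 0"
    and "measure_network \<omega>X \<mu>X"
    and "measure_network \<omega>Y \<mu>Y"
    and "measure_network \<omega>Z \<mu>Z"
  shows "dNGP \<alpha> \<omega>X \<mu>X \<omega>Y \<mu>Y \<ge> 0 \<and>
      dNGP \<alpha> \<omega>X \<mu>X \<omega>X \<mu>X = 0 \<and>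
      dNGP \<alpha> \<omega>X \<mu>X \<omega>Y \<mu>Y = dNGP \<alpha> \<omega>Y \<mu>Y \<omega>X \<mu>X \<and>
      dNGP \<alpha> \<omega>X \<mu>X \<omega>Z \<mu>Z \<le> dNGP \<alpha> \<omega>X \<mu>X \<omega>Y \<mu>Y + dNGP \<alpha> \<omega>Y \<mu>Y \<omega>Z \<mu>Z"
proof -
  note a = assms(1) and nX = assms(2) and nY = assms(3) and nZ = assms(4)
  define IXY where "IXY = (INF \<pi>\<in>couplings \<mu>X \<mu>Y. Fv \<alpha> \<omega>X \<omega>Y \<pi>)"
  define IYX where "IYX = (INF \<pi>\<in>couplings \<mu>Y \<mu>X. Fv \<alpha> \<omega>Y \<omega>X \<pi>)"
  define IXX where "IXX = (INF \<pi>\<in>couplings \<mu>X \<mu>X. Fv \<alpha> \<omega>X \<omega>X \<pi>)"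
  define IXZ where "IXZ = (INF \<pi>\<in>couplings \<mu>X \<mu>Z. Fv \<alpha> \<omega>X \<omega>Z \<pi>)"
  define IYZ where "IYZ = (INF \<pi>\<in>couplings \<mu>Y \<mu>Z. Fv \<alpha> \<omega>Y \<omega>Z \<pi>)"
  have 1: "IXY \<ge> 0" unfolding IXY_def by (rule INF_nonneg_Fv[OF nX nY a])
  have 2: "IXX = 0"
  proof (rule antisym)
    obtain \<pi> where \<pi>: "\<pi> \<in> couplings \<mu>X \<mu>X" "Fv \<alpha> \<omega>X \<omega>X \<pi> = 0"
      using diag_coupling[OF nX a] by blast
    show "IXX \<le> 0" unfolding IXX_def using cINF_lower[OF bdd_Fv[OF nX nX a] \<pi>(1)] \<pi>(2) by simp
    show "0 \<le> IXX" unfolding IXX_def by (rule INF_nonneg_Fv[OF nX nX a])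
  qed
  have 3: "IXY = IYX"
  proof -
    have "(\<lambda>\<pi>. Fv \<alpha> \<omega>X \<omega>Y \<pi>) ` couplings \<mu>X \<mu>Y = (\<lambda>\<pi>. Fv \<alpha> \<omega>Y \<omega>X \<pi>) ` couplings \<mu>Y \<mu>X"
    proof
      show "(\<lambda>\<pi>. Fv \<alpha> \<omega>X \<omega>Y \<pi>) ` couplings \<mu>X \<mu>Y \<subseteq> (\<lambda>\<pi>. Fv \<alpha> \<omega>Y \<omega>X \<pi>) ` couplings \<mu>Y \<mu>X"
      proof
        fix v assume "v \<in> (\<lambda>\<pi>. Fv \<alpha> \<omega>X \<omega>Y \<pi>) ` couplings \<mu>X \<mu>Y"
        then obtain \<pi> where \<pi>: "\<pi> \<in> couplings \<mu>X \<mu>Y" "v = Fv \<alpha> \<omega>X \<omega>Y \<pi>" by auto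
        have sw: "distr \<pi> borel (\<lambda>z. (snd z, fst z)) \<in> couplings \<mu>Y \<mu>X"
          "Fv \<alpha> \<omega>Y \<omega>X (distr \<pi> borel (\<lambda>z. (snd z, fst z))) = Fv \<alpha> \<omega>X \<omega>Y \<pi>"
          using swap_coupling[OF nX nY \<pi>(1), of \<alpha>] by auto
        show "v \<in> (\<lambda>\<pi>. Fv \<alpha> \<omega>Y \<omega>X \<pi>) ` couplings \<mu>Y \<mu>X"
          by (rule image_eqI[OF _ sw(1)]) (simp add: sw(2) \<pi>(2))
      qed
      show "(\<lambda>\<pi>. Fv \<alpha> \<omega>Y \<omega>X \<pi>) ` couplings \<mu>Y \<mu>X \<subseteq> (\<lambda>\<pi>. Fv \<alpha> \<omega>X \<omega>Y \<pi>) ` couplings \<mu>X \<mu>Y"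
      proof
        fix v assume "v \<in> (\<lambda>\<pi>. Fv \<alpha> \<omega>Y \<omega>X \<pi>) ` couplings \<mu>Y \<mu>X"
        then obtain \<pi> where \<pi>: "\<pi> \<in> couplings \<mu>Y \<mu>X" "v = Fv \<alpha> \<omega>Y \<omega>X \<pi>" by auto
        have sw: "distr \<pi> borel (\<lambda>z. (snd z, fst z)) \<in> couplings \<mu>X \<mu>Y"
          "Fv \<alpha> \<omega>X \<omega>Y (distr \<pi> borel (\<lambda>z. (snd z, fst z))) = Fv \<alpha> \<omega>Y \<omega>X \<pi>"
          using swap_coupling[OF nY nX \<pi>(1), of \<alpha>] by auto
        show "v \<in> (\<lambda>\<pi>. Fv \<alpha> \<omega>X \<omega>Y \<pi>) ` couplings \<mu>X \<mu>Y"
          by (rule image_eqI[OF _ sw(1)]) (simp add: sw(2) \<pi>(2))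
      qed
    qed
    then show ?thesis unfolding IXY_def IYX_def by simp
  qed
  have 4: "IXZ \<le> IXY + IYZ"
  proof -
    have step: "IXZ \<le> Fv \<alpha> \<omega>X \<omega>Y \<pi>1 + Fv \<alpha> \<omega>Y \<omega>Z \<pi>2"
      if q1: "\<pi>1 \<in> couplings \<mu>X \<mu>Y" and q2: "\<pi>2 \<in> couplings \<mu>Y \<mu>Z" for \<pi>1 \<pi>2
    proof -
      obtain \<rho> where \<rho>: "\<rho> \<in> couplings \<mu>X \<mu>Z" "Fv \<alpha> \<omega>X \<omega>Z \<rho> \<le> Fv \<alpha> \<omega>X \<omega>Y \<pi>1 + Fv \<alpha> \<omega>Y \<omega>Z \<pi>2"
        using triangle_step[OF nX nY nZ a q1 q2] by blast
      have "IXZ \<le> Fv \<alpha> \<omega>X \<omega>Z \<rho>" unfolding IXZ_def by (rule cINF_lower[OF bdd_Fv[OF nX nZ a] \<rho>(1)])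
      then show ?thesis using \<rho>(2) by simp
    qed
    have "IXZ - Fv \<alpha> \<omega>Y \<omega>Z \<pi>2 \<le> IXY" if \<pi>2: "\<pi>2 \<in> couplings \<mu>Y \<mu>Z" for \<pi>2
      unfolding IXY_def using prod_coupling[OF nX nY] step[OF _ \<pi>2]
      by (intro cINF_greatest) (auto simp: algebra_simps)
    then have "IXZ - IXY \<le> IYZ"
      unfolding IYZ_def using prod_coupling[OF nY nZ]
      by (intro cINF_greatest) (auto simp: algebra_simps)
    then show ?thesis by simp
  qed
  show ?thesis
    unfolding dNGP_alt IXY_def[symmetric] IYX_def[symmetric] IXX_def[symmetric] IXZ_def[symmetric] IYZ_def[symmetric]
    using 1 2 3 4 by simp
qed

end
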